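(* Let $\phi$ be a propositional CNF formula and run Algorithm 1 (described in the context) on $\phi$ with an arbitrary decomposition $\psi_1,\dots,\psi_k$. If the algorithm returns $\top$, then $\phi$ is satisfiable; if it returns $\bot$, then $\phi$ is unsatisfiable.
   Context: A formula in CNF is a conjunction of clauses (disjunctions of literals); $V_\chi$ denotes the set of variables of $\chi$. Given formulas $A,B$ with $A\wedge B$ unsatisfiable, an interpolant for $\neg(A\wedge B)$ is a formula $I$ with $A\Rightarrow I$, $I\Rightarrow\neg B$, and $V_I\subseteq V_A\cap V_B$. Algorithm 1: decompose $\phi$ into formulas $\psi_1,\dots,\psi_k$, each being a conjunction of clauses of $\phi$, with $\phi\equiv\psi_1\wedge\dots\wedge\psi_k$ (no requirement that they share no variables). Let $V=\bigcup_{i\neq j}(V_{\psi_i}\cap V_{\psi_j})$ be the shared variables. Set $G:=\top$ and repeat: if $G$ is unsatisfiable, return $\bot$; otherwise pick an assignment $m$ to all variables of $V$ satisfying $G$ (viewed as a conjunction of literals). For each $i=1,\dots,k$: if $\psi_i\wedge m$ is unsatisfiable, compute an interpolant $I$ for $\neg(\psi_i\wedge m)$ (so its variables lie in $V_{\psi_i}\cap V$) and set $G:=G\wedge I$. If no $\psi_i\wedge m$ was unsatisfiable in this round, return $\top$; otherwise repeat. *)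

theory Defs
  imports Main
begin

datatype 'v form = FVar 'v | FNot "'v form" | FAnd "'v form" "'v form"
  | FOr "'v form" "'v form" | FTrue | FFalse

fun eval :: "('v \<Rightarrow> bool) \<Rightarrow> 'v form \<Rightarrow> bool" where
  "eval a (FVar v) = a v"
| "eval a (FNot f) = (\<not> eval a f)"
| "eval a (FAnd f g) = (eval a f \<and> eval a g)"
| "eval a (FOr f g) = (eval a f \<or> eval a g)"
| "eval a FTrue = True"
| "eval a FFalse = False"

fun fvars :: "'v form \<Rightarrow> 'v set" where
  "fvars (FVar v) = {v}"
| "fvars (FNot f) = fvars f"
| "fvars (FAnd f g) = fvars f \<union> fvars g"
| "fvars (FOr f g) = fvars f \<union> fvars g"
| "fvars FTrue = {}"
| "fvars FFalse = {}"

text \<open>A literal is a variable with a polarity (True = positive); a clause is a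
  disjunction of literals, a CNF is a conjunction of clauses.\<close>

type_synonym 'v clause = "('v \<times> bool) list"
type_synonym 'v cnf = "'v clause list"

definition sat_clause :: "('v \<Rightarrow> bool) \<Rightarrow> 'v clause \<Rightarrow> bool" where
  "sat_clause a c = (\<exists>(v, p) \<in> set c. a v = p)"

definition sat_cnf :: "('v \<Rightarrow> bool) \<Rightarrow> 'v cnf \<Rightarrow> bool" where
  "sat_cnf a \<phi> = (\<forall>c \<in> set \<phi>. sat_clause a c)"

definition satisfiable :: "'v cnf \<Rightarrow> bool" where
  "satisfiable \<phi> = (\<exists>a. sat_cnf a \<phi>)"

definition cvars :: "'v cnf \<Rightarrow> 'v set" where
  "cvars \<phi> = (\<Union>c \<in> set \<phi>. fst ` set c)"

definition is_decomposition :: "'v cnf \<Rightarrow> 'v cnf list \<Rightarrow> bool" where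
  "is_decomposition \<phi> \<psi>s =
     ((\<forall>i < length \<psi>s. set (\<psi>s ! i) \<subseteq> set \<phi>) \<and>
      (\<forall>a. sat_cnf a \<phi> \<longleftrightarrow> (\<forall>i < length \<psi>s. sat_cnf a (\<psi>s ! i))))"

definition shared_vars :: "'v cnf list \<Rightarrow> 'v set" where
  "shared_vars \<psi>s = (\<Union>i < length \<psi>s. \<Union>j < length \<psi>s.
       if i \<noteq> j then cvars (\<psi>s ! i) \<inter> cvars (\<psi>s ! j) else {})"

text \<open>An assignment m to the variables of V is represented by a total function,
  of which only the values on V matter. The formula \<psi> \<and> m (m read as the
  conjunction of literals over V) is unsatisfiable iff no assignment agreeing
  with m on V satisfies \<psi>.\<close>
definition unsat_with :: "'v set \<Rightarrow> 'v cnf \<Rightarrow> ('v \<Rightarrow> bool) \<Rightarrow> bool" where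
  "unsat_with V \<psi> m = (\<not> (\<exists>a. (\<forall>v \<in> V. a v = m v) \<and> sat_cnf a \<psi>))"

text \<open>I is an interpolant for \<not>(\<psi> \<and> m): \<psi> \<Rightarrow> I, I \<Rightarrow> \<not>m, and
  V_I \<subseteq> V_\<psi> \<inter> V (the variables of m are exactly V).\<close>
definition is_interpolant :: "'v set \<Rightarrow> 'v cnf \<Rightarrow> ('v \<Rightarrow> bool) \<Rightarrow> 'v form \<Rightarrow> bool" where
  "is_interpolant V \<psi> m I =
     ((\<forall>a. sat_cnf a \<psi> \<longrightarrow> eval a I) \<and>
      (\<forall>a. eval a I \<longrightarrow> \<not> (\<forall>v \<in> V. a v = m v)) \<and>
      fvars I \<subseteq> cvars \<psi> \<inter> V)"

definition round_update :: "'v cnf list \<Rightarrow> ('v \<Rightarrow> bool) \<Rightarrow> (nat \<Rightarrow> 'v form) \<Rightarrow> 'v form \<Rightarrow> 'v form" where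
  "round_update \<psi>s m I G =
     foldl (\<lambda>g i. if unsat_with (shared_vars \<psi>s) (\<psi>s ! i) m then FAnd g (I i) else g)
           G [0..<length \<psi>s]"

text \<open>alg1_run \<psi>s G r: starting the loop with current value G, some run of the
  (nondeterministic: choice of m and of interpolants) algorithm returns r,
  where r = True means \<top> and r = False means \<bottom>.\<close>
inductive alg1_run :: "'v cnf list \<Rightarrow> 'v form \<Rightarrow> bool \<Rightarrow> bool" where
  ret_bot: "\<not> (\<exists>a. eval a G) \<Longrightarrow> alg1_run \<psi>s G False"
| ret_top: "eval m G \<Longrightarrow>
     (\<forall>i < length \<psi>s. \<not> unsat_with (shared_vars \<psi>s) (\<psi>s ! i) m) \<Longrightarrow>
     alg1_run \<psi>s G True"
| step: "eval m G \<Longrightarrow>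
     (\<exists>i < length \<psi>s. unsat_with (shared_vars \<psi>s) (\<psi>s ! i) m) \<Longrightarrow>
     (\<forall>i < length \<psi>s. unsat_with (shared_vars \<psi>s) (\<psi>s ! i) m \<longrightarrow>
         is_interpolant (shared_vars \<psi>s) (\<psi>s ! i) m (I i)) \<Longrightarrow>
     alg1_run \<psi>s (round_update \<psi>s m I G) r \<Longrightarrow>
     alg1_run \<psi>s G r"

end

theory Submission
  imports Defs
begin

lemma sat_cnf_cong:
  assumes "\<forall>v\<in>cvars \<psi>. a v = b v"
  shows "sat_cnf a \<psi> = sat_cnf b \<psi>"
proof -
  have eq: "a v = b v" if "c \<in> set \<psi>" "(v,p) \<in> set c" for c v p
  proof -
    have "v \<in> fst ` set c" using that(2) by force
    then have "v \<in> cvars \<psi>" unfolding cvars_def using that(1) by blast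
    then show ?thesis using assms by blast
  qed
  have "sat_clause a c = sat_clause b c" if "c \<in> set \<psi>" for c
    unfolding sat_clause_def using eq[OF that] by auto
  then show ?thesis unfolding sat_cnf_def by auto
qed

lemma round_update_inv:
  assumes "\<forall>a. sat_cnf a \<phi> \<longrightarrow> eval a G"
    and "\<forall>i < length \<psi>s. set (\<psi>s ! i) \<subseteq> set \<phi>"
    and "\<forall>i < length \<psi>s. unsat_with (shared_vars \<psi>s) (\<psi>s ! i) m \<longrightarrow>
         is_interpolant (shared_vars \<psi>s) (\<psi>s ! i) m (I i)"
  shows "\<forall>a. sat_cnf a \<phi> \<longrightarrow> eval a (round_update \<psi>s m I G)"
proof -
  have "\<forall>a. sat_cnf a \<phi> \<longrightarrow> eval a (foldl (\<lambda>g i. if unsat_with (shared_vars \<psi>s) (\<psi>s ! i) m then FAnd g (I i) else g) G xs)"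
    if "set xs \<subseteq> {..<length \<psi>s}" for xs
    using that
  proof (induction xs rule: rev_induct)
    case Nil then show ?case using assms(1) by simp
  next
    case (snoc x xs)
    have x: "x < length \<psi>s" using snoc.prems by auto
    show ?case
    proof (intro allI impI)
      fix a assume sa: "sat_cnf a \<phi>"
      have s2: "sat_cnf a (\<psi>s ! x)" using sa assms(2) x unfolding sat_cnf_def by blast
      show "eval a (foldl (\<lambda>g i. if unsat_with (shared_vars \<psi>s) (\<psi>s ! i) m then FAnd g (I i) else g) G (xs @ [x]))"
      proof -
        have ih: "eval a (foldl (\<lambda>g i. if unsat_with (shared_vars \<psi>s) (\<psi>s ! i) m then FAnd g (I i) else g) G xs)"
          using snoc.IH snoc.prems sa by simp
        have "unsat_with (shared_vars \<psi>s) (\<psi>s ! x) m \<Longrightarrow> eval a (I x)"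
          using s2 assms(3) x unfolding is_interpolant_def by blast
        then show ?thesis using ih by simp
      qed
    qed
  qed
  moreover have "set [0..<length \<psi>s] \<subseteq> {..<length \<psi>s}" by auto
  ultimately show ?thesis unfolding round_update_def by blast
qed

lemma bot_sound:
  assumes "alg1_run \<psi>s G r" "\<forall>i < length \<psi>s. set (\<psi>s ! i) \<subseteq> set \<phi>"
    "\<forall>a. sat_cnf a \<phi> \<longrightarrow> eval a G"
  shows "\<not> r \<longrightarrow> \<not> satisfiable \<phi>"
  using assms
proof (induction rule: alg1_run.induct)
  case (ret_bot G \<psi>s) then show ?case unfolding satisfiable_def by blast
next
  case (ret_top m G \<psi>s) then show ?case by simp
next
  case (step m G \<psi>s I r)
  have "\<forall>a. sat_cnf a \<phi> \<longrightarrow> eval a (round_update \<psi>s m I G)"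
    by (rule round_update_inv) (use step.prems step.hyps(3) in auto)
  then show ?case using step.IH step.prems(1) by blast
qed

lemma top_sound:
  assumes "alg1_run \<psi>s G r" "is_decomposition \<phi> \<psi>s"
  shows "r \<longrightarrow> satisfiable \<phi>"
  using assms
proof (induction rule: alg1_run.induct)
  case (ret_bot G \<psi>s) then show ?case by simp
next
  case (step m G \<psi>s I r) then show ?case by blast
next
  case (ret_top m G \<psi>s)
  let ?V = "shared_vars \<psi>s"
  let ?n = "length \<psi>s"
  have "\<forall>i. \<exists>a. i < ?n \<longrightarrow> (\<forall>v \<in> ?V. a v = m v) \<and> sat_cnf a (\<psi>s ! i)"
    using ret_top.hyps(2) unfolding unsat_with_def by blast
  from choice[OF this] obtain A where A0: "\<forall>i. i < ?n \<longrightarrow> (\<forall>v \<in> ?V. A i v = m v) \<and> sat_cnf (A i) (\<psi>s ! i)"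
    by blast
  have A: "\<And>i. i < ?n \<Longrightarrow> (\<forall>v \<in> ?V. A i v = m v) \<and> sat_cnf (A i) (\<psi>s ! i)"
    using A0 by blast
  define a where "a v = (if \<exists>i<?n. v \<in> cvars (\<psi>s ! i)
      then A (SOME i. i < ?n \<and> v \<in> cvars (\<psi>s ! i)) v else m v)" for v
  have "sat_cnf a (\<psi>s ! i)" if i: "i < ?n" for i
  proof -
    have "\<forall>v\<in>cvars (\<psi>s ! i). a v = A i v"
    proof
      fix v assume v: "v \<in> cvars (\<psi>s ! i)"
      define j where "j = (SOME i. i < ?n \<and> v \<in> cvars (\<psi>s ! i))"
      have j: "j < ?n \<and> v \<in> cvars (\<psi>s ! j)" unfolding j_def
        by (rule someI_ex) (use i v in blast)
      have ex: "\<exists>i<?n. v \<in> cvars (\<psi>s ! i)" using i v by blast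
      have av: "a v = A j v" unfolding j_def by (subst a_def) (simp only: ex if_True)
      show "a v = A i v"
      proof (cases "j = i")
        case True then show ?thesis using av by simp
      next
        case False
        then have "v \<in> cvars (\<psi>s ! i) \<inter> cvars (\<psi>s ! j)" using j v by blast
        then have m: "v \<in> (if i \<noteq> j then cvars (\<psi>s ! i) \<inter> cvars (\<psi>s ! j) else {})"
          using \<open>j \<noteq> i\<close> by simp
        have "v \<in> ?V" unfolding shared_vars_def
          apply (rule UN_I[of i]) using i apply simp
          apply (rule UN_I[of j]) using j apply simp
          using m by simp
        then show ?thesis using av A i j by simp
      qed
    qed
    then have "sat_cnf a (\<psi>s ! i) = sat_cnf (A i) (\<psi>s ! i)" by (rule sat_cnf_cong)
    then show ?thesis using A[OF i] by simp
  qed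
  moreover have "\<forall>a. sat_cnf a \<phi> \<longleftrightarrow> (\<forall>i < length \<psi>s. sat_cnf a (\<psi>s ! i))"
    using ret_top.prems unfolding is_decomposition_def by (rule conjunct2)
  ultimately have "sat_cnf a \<phi>" by blast
  then show ?case unfolding satisfiable_def by blast
qed

theorem mainTheorem2:
  fixes \<phi> :: "'v cnf" and \<psi>s :: "'v cnf list" and r :: bool
  assumes "is_decomposition \<phi> \<psi>s"
    and "alg1_run \<psi>s FTrue r"
  shows "(r \<longrightarrow> satisfiable \<phi>) \<and> (\<not> r \<longrightarrow> \<not> satisfiable \<phi>)"
proof -
  have d: "\<forall>i < length \<psi>s. set (\<psi>s ! i) \<subseteq> set \<phi>"
    using assms(1) unfolding is_decomposition_def by blast
  have t: "\<forall>a. sat_cnf a \<phi> \<longrightarrow> eval a FTrue" by simp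
  show ?thesis using top_sound[OF assms(2,1)] bot_sound[OF assms(2) d t] by blast
qed

end
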